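(* Let $k$ be a positive integer, $p\in(0,1)$, $z\ge 1$ an integer, and let $(x_1,\dots,x_k)$, $(y_1,\dots,y_k)$ be sequences of nonnegative integers such that $(x_1,\dots,x_k)$ is a permutation of $(y_1,\dots,y_k)$ and $S_{i_1,\dots,i_m}(x)=S_{i_1,\dots,i_m}(y)$ for all $1\le m\le z$ and all indices $i_1,\dots,i_m$. Let $x^*=\max\{x_1,\dots,x_k\}$, and let $x=10^{n+x_1}10^{n+x_2}\cdots10^{n+x_k}$ and $y=10^{n+y_1}\cdots10^{n+y_k}$. Let $C>0$ and let $a=10^{a_1}10^{a_2}\cdots10^{a_k}$ with nonnegative integers $a_j$ satisfying $a_j-n(1-p)\in[-C\sqrt{n\log n},C\sqrt{n\log n}]$ for all $j\in[k]$. Then for sufficiently large $n$ and $c$ (depending on $C,k,p,x^*$), $$\frac{\Pr_{\tilde{x}\sim\mathrm{Del}(x)}[\tilde{x}=a]}{\Pr_{\tilde{y}\sim\mathrm{Del}(y)}[\tilde{y}=a]}\in\left[1-(c\log n/n)^{\frac{z+1}{2}},\,1+(c\log n/n)^{\frac{z+1}{2}}\right].$$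
   Context: $0^t$ denotes $t$ consecutive zeros. For an integer sequence $x=(x_1,\dots,x_k)$ (indices mod $k$), the cyclic statistic of order $m$ is $S_{i_1,\dots,i_m}(x)=\sum_{j=1}^k x_{i_1+j}\cdots x_{i_m+j}$. The circular deletion channel $\mathrm{Del}(w)$ with deletion probability $p$ deletes each bit of $w$ independently with probability $p$ and returns a uniformly random cyclic shift of the result. *)

theory Defs
  imports "HOL-Analysis.Analysis"
begin

definition cyc_stat :: "nat list \<Rightarrow> nat list \<Rightarrow> nat" where
  "cyc_stat x is = (\<Sum>j<length x. prod_list (map (\<lambda>i. x ! ((i + j) mod length x)) is))"

text \<open>Binary strings as bool lists (True = 1, False = 0).
  blocks [b1,...,bk] = 1 0^{b1} 1 0^{b2} ... 1 0^{bk}.\<close>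
definition blocks :: "nat list \<Rightarrow> bool list" where
  "blocks bs = concat (map (\<lambda>b. True # replicate b False) bs)"

definition cyc_shift_prob :: "bool list \<Rightarrow> bool list \<Rightarrow> real" where
  "cyc_shift_prob v u =
     (if v = [] then (if u = [] then 1 else 0)
      else real (card {s. s < length v \<and> rotate s v = u}) / real (length v))"

text \<open>Circular deletion channel Del(w): each bit deleted independently with probability p
  (K = set of kept positions), then a uniformly random cyclic shift of the result.
  del_prob p w u = Pr[Del(w) = u].\<close>
definition del_prob :: "real \<Rightarrow> bool list \<Rightarrow> bool list \<Rightarrow> real" where
  "del_prob p w u =
     (\<Sum>K\<in>Pow {0..<length w}.
        p ^ (length w - card K) * (1 - p) ^ card K * cyc_shift_prob (nths w K) u)"

end

theory Submission
  imports Defs "HOL-Computational_Algebra.Polynomial"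
begin


definition fd :: "(nat \<Rightarrow> real) \<Rightarrow> nat \<Rightarrow> real" where
  "fd f m = f (Suc m) - f m"

definition grd :: "real \<Rightarrow> nat \<Rightarrow> (nat \<Rightarrow> real) \<Rightarrow> nat \<Rightarrow> real \<Rightarrow> nat \<Rightarrow> bool" where
  "grd e Y f q K I = (\<forall>i\<le>I. \<forall>m. m + i \<le> Y \<longrightarrow> \<bar>(fd ^^ i) f m\<bar> \<le> K * e ^ (i + q))"

lemma fdp_shift: "(fd ^^ i) (\<lambda>m. f (Suc m)) = (\<lambda>m. (fd ^^ i) f (Suc m))"
proof (induction i)
  case (Suc i)
  have "(fd ^^ Suc i) (\<lambda>m. f (Suc m)) = fd ((fd ^^ i) (\<lambda>m. f (Suc m)))" by simp
  also have "\<dots> = fd (\<lambda>m. (fd ^^ i) f (Suc m))" by (simp only: Suc)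
  also have "\<dots> = (\<lambda>m. (fd ^^ Suc i) f (Suc m))" by (rule ext) (simp add: fd_def)
  finally show ?case .
qed simp

lemma fdp_add: "(fd ^^ i) (\<lambda>m. u m + v m) = (\<lambda>m. (fd ^^ i) u m + (fd ^^ i) v m)"
proof (induction i)
  case (Suc i)
  have "(fd ^^ Suc i) (\<lambda>m. u m + v m) = fd ((fd ^^ i) (\<lambda>m. u m + v m))" by simp
  also have "\<dots> = fd (\<lambda>m. (fd ^^ i) u m + (fd ^^ i) v m)" by (simp only: Suc)
  also have "\<dots> = (\<lambda>m. (fd ^^ Suc i) u m + (fd ^^ Suc i) v m)" by (rule ext) (simp add: fd_def)
  finally show ?case .
qed simp

lemma fdp_cmult: "(fd ^^ i) (\<lambda>m. c * u m) = (\<lambda>m. c * (fd ^^ i) u m)"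
  by (induction i) (auto simp: fd_def algebra_simps)

lemma fdp_const: "i \<ge> 1 \<Longrightarrow> (fd ^^ i) (\<lambda>m. c) = (\<lambda>m. 0)"
proof (induction i)
  case 0 then show ?case by simp
next
  case (Suc i) then show ?case by (cases i) (auto simp: fd_def)
qed

lemma fdp_Suc: "(fd ^^ Suc i) f = (fd ^^ i) (fd f)"
  by (simp add: funpow_Suc_right del: funpow.simps)

lemma fd_mult: "fd (\<lambda>m. f m * g m) = (\<lambda>m. f (Suc m) * fd g m + fd f m * g m)"
  by (auto simp: fd_def algebra_simps)

lemma grd_shift: "grd e (Suc Y) f q K (Suc I) \<Longrightarrow> grd e Y (\<lambda>m. f (Suc m)) q K I"
  unfolding grd_def fdp_shift by auto

lemma grd_fd: "grd e (Suc Y) f q K (Suc I) \<Longrightarrow> grd e Y (fd f) (Suc q) K I"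
  unfolding grd_def
proof (intro allI impI)
  fix i m assume A: "\<forall>i\<le>Suc I. \<forall>m. m + i \<le> Suc Y \<longrightarrow> \<bar>(fd ^^ i) f m\<bar> \<le> K * e ^ (i + q)"
    and i: "i \<le> I" and m: "m + i \<le> Y"
  have "\<bar>(fd ^^ Suc i) f m\<bar> \<le> K * e ^ (Suc i + q)" using A i m by auto
  then show "\<bar>(fd ^^ i) (fd f) m\<bar> \<le> K * e ^ (i + Suc q)" by (simp add: fdp_Suc[symmetric] del: funpow.simps)
qed

lemma grd_prod:
  assumes "grd e Y f q1 K1 I" "grd e Y g q2 K2 I" "m + I \<le> Y" "K1 \<ge> 0" "K2 \<ge> 0" "e \<ge> 0"
  shows "\<bar>(fd ^^ I) (\<lambda>m. f m * g m) m\<bar> \<le> 2 ^ I * K1 * K2 * e ^ (I + q1 + q2)"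
  using assms
proof (induction I arbitrary: f g q1 q2 Y m)
  case 0
  then have "\<bar>f m\<bar> \<le> K1 * e ^ q1" "\<bar>g m\<bar> \<le> K2 * e ^ q2" unfolding grd_def by (auto dest: spec[of _ 0])
  then have "\<bar>f m\<bar> * \<bar>g m\<bar> \<le> (K1 * e ^ q1) * (K2 * e ^ q2)"
    by (intro mult_mono) (auto simp: 0)
  then show ?case by (simp add: abs_mult power_add mult_ac)
next
  case (Suc I)
  from Suc.prems(3) obtain Y' where Y: "Y = Suc Y'" "m + I \<le> Y'" by (cases Y) auto
  have g1: "grd e Y' (\<lambda>m. f (Suc m)) q1 K1 I" using grd_shift Suc.prems(1) Y by auto
  have g2: "grd e Y' (fd g) (Suc q2) K2 I" using grd_fd Suc.prems(2) Y by auto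
  have g3: "grd e Y' (fd f) (Suc q1) K1 I" using grd_fd Suc.prems(1) Y by auto
  have g4: "grd e Y' g q2 K2 I" using Suc.prems(2) Y unfolding grd_def by auto
  have b1: "\<bar>(fd ^^ I) (\<lambda>m. f (Suc m) * fd g m) m\<bar> \<le> 2 ^ I * K1 * K2 * e ^ (I + q1 + Suc q2)"
    using Suc.IH[OF g1 g2 Y(2)] Suc.prems by auto
  have b2: "\<bar>(fd ^^ I) (\<lambda>m. fd f m * g m) m\<bar> \<le> 2 ^ I * K1 * K2 * e ^ (I + Suc q1 + q2)"
    using Suc.IH[OF g3 g4 Y(2)] Suc.prems by auto
  have "(fd ^^ Suc I) (\<lambda>m. f m * g m) m = (fd ^^ I) (\<lambda>m. f (Suc m) * fd g m) m + (fd ^^ I) (\<lambda>m. fd f m * g m) m"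
    by (simp only: fdp_Suc fd_mult fdp_add)
  then show ?case using b1 b2 by (simp add: algebra_simps)
qed



lemma newton: "f m = (\<Sum>d\<le>m. real (m choose d) * (fd ^^ d) f 0)"
proof (induction m arbitrary: f)
  case 0 then show ?case by simp
next
  case (Suc m)
  define F where "F d = (fd ^^ d) f 0" for d
  have e1: "(fd ^^ d) (fd f) 0 = F (Suc d)" for d unfolding F_def by (simp only: fdp_Suc)
  have "f (Suc m) = f m + fd f m" by (simp add: fd_def)
  also have "\<dots> = (\<Sum>d\<le>m. real (m choose d) * F d) + (\<Sum>d\<le>m. real (m choose d) * F (Suc d))"
    using Suc[of f] Suc[of "fd f"] by (simp add: e1 F_def)
  also have "(\<Sum>d\<le>m. real (m choose d) * F d) = (\<Sum>d\<le>Suc m. real (m choose d) * F d)"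
    by simp
  also have "\<dots> = F 0 + (\<Sum>d\<le>m. real (m choose Suc d) * F (Suc d))"
    by (subst sum.atMost_Suc_shift) simp
  also have "F 0 + (\<Sum>d\<le>m. real (m choose Suc d) * F (Suc d)) + (\<Sum>d\<le>m. real (m choose d) * F (Suc d))
      = F 0 + (\<Sum>d\<le>m. real (Suc m choose Suc d) * F (Suc d))"
    by (simp add: sum.distrib[symmetric] algebra_simps)
  also have "\<dots> = (\<Sum>d\<le>Suc m. real (Suc m choose d) * F d)"
    by (subst sum.atMost_Suc_shift) simp
  finally show ?case by (simp add: F_def)
qed

definition bp :: "nat \<Rightarrow> real poly" where
  "bp d = smult (1 / fact d) (\<Prod>i=0..<d. [:- of_nat i, 1:])"

lemma poly_bp: "poly (bp d) (real m) = real (m choose d)"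
  unfolding bp_def binomial_gbinomial gbinomial_prod_rev
  by (simp add: poly_prod divide_inverse mult.commute)

lemma degree_bp: "degree (bp d) \<le> d"
proof -
  have "degree (\<Prod>i=0..<d. [:- of_nat i, 1::real:]) \<le> (\<Sum>i=0..<d. degree [:- of_nat i, 1::real:])"
    using degree_prod_sum_le[of "{0..<d}" "\<lambda>i. [:- of_nat i, 1::real:]"] by (simp add: o_def)
  also have "\<dots> \<le> d" by simp
  finally show ?thesis unfolding bp_def by simp
qed

lemma poly_sum_upto: "degree P \<le> X \<Longrightarrow> poly P x = (\<Sum>j\<le>X. coeff P j * x ^ j)" for P :: "real poly"
  by (subst poly_altdef, rule sum.mono_neutral_left) (auto simp: coeff_eq_0)

definition BB :: "nat \<Rightarrow> real" where
  "BB X = (\<Sum>d\<le>X. \<Sum>j\<le>X. \<bar>coeff (bp d) j\<bar>)"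

lemma interp:
  assumes g: "grd e X f 0 K X" and e: "0 \<le> e" "e \<le> 1" and K: "K \<ge> 0"
  shows "\<exists>c. (\<forall>m\<le>X. f m = (\<Sum>j\<le>X. c j * real m ^ j)) \<and> (\<forall>j. \<bar>c j\<bar> \<le> K * BB X * e ^ j) \<and> c 0 = f 0"
proof -
  define c where "c j = (\<Sum>d\<le>X. (fd ^^ d) f 0 * coeff (bp d) j)" for j
  have rep: "f m = (\<Sum>j\<le>X. c j * real m ^ j)" if m: "m \<le> X" for m
  proof -
    have "f m = (\<Sum>d\<le>m. real (m choose d) * (fd ^^ d) f 0)" by (rule newton)
    also have "\<dots> = (\<Sum>d\<le>X. real (m choose d) * (fd ^^ d) f 0)"
      by (rule sum.mono_neutral_left) (use m in auto)
    also have "\<dots> = (\<Sum>d\<le>X. (fd ^^ d) f 0 * (\<Sum>j\<le>X. coeff (bp d) j * real m ^ j))"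
      apply (rule sum.cong, simp)
      subgoal for d using poly_sum_upto[of "bp d" X "real m"] degree_bp[of d] poly_bp[of d m] by simp
      done
    also have "\<dots> = (\<Sum>d\<le>X. \<Sum>j\<le>X. (fd ^^ d) f 0 * coeff (bp d) j * real m ^ j)"
      by (simp add: sum_distrib_left mult.assoc)
    also have "\<dots> = (\<Sum>j\<le>X. \<Sum>d\<le>X. (fd ^^ d) f 0 * coeff (bp d) j * real m ^ j)"
      by (rule sum.swap)
    also have "\<dots> = (\<Sum>j\<le>X. c j * real m ^ j)"
      unfolding c_def by (simp add: sum_distrib_right)
    finally show ?thesis .
  qed
  have bnd: "\<bar>c j\<bar> \<le> K * BB X * e ^ j" for j
  proof (cases "j \<le> X")
    case False
    have "coeff (bp d) j = 0" if "d \<le> X" for d using degree_bp[of d] that False by (intro coeff_eq_0) linarith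
    then have "c j = 0" unfolding c_def by simp
    then show ?thesis using K e by (simp add: BB_def sum_nonneg)
  next
    case True
    have "\<bar>c j\<bar> \<le> (\<Sum>d\<le>X. \<bar>(fd ^^ d) f 0 * coeff (bp d) j\<bar>)" unfolding c_def by (rule sum_abs)
    also have "\<dots> \<le> (\<Sum>d\<le>X. K * e ^ j * \<bar>coeff (bp d) j\<bar>)"
    proof (rule sum_mono)
      fix d assume d: "d \<in> {..X}"
      show "\<bar>(fd ^^ d) f 0 * coeff (bp d) j\<bar> \<le> K * e ^ j * \<bar>coeff (bp d) j\<bar>"
      proof (cases "j \<le> d")
        case True
        have "\<bar>(fd ^^ d) f 0\<bar> \<le> K * e ^ d" using g d unfolding grd_def by auto
        also have "\<dots> \<le> K * e ^ j" using True e K by (intro mult_left_mono power_decreasing) auto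
        finally show ?thesis by (simp add: abs_mult mult_right_mono)
      next
        case False
        then have "coeff (bp d) j = 0" using degree_bp[of d] by (intro coeff_eq_0) auto
        then show ?thesis by simp
      qed
    qed
    also have "\<dots> = K * e ^ j * (\<Sum>d\<le>X. \<bar>coeff (bp d) j\<bar>)" by (simp add: sum_distrib_left)
    also have "\<dots> \<le> K * e ^ j * BB X"
    proof -
      have "(\<Sum>d\<le>X. \<bar>coeff (bp d) j\<bar>) \<le> (\<Sum>d\<le>X. \<Sum>j\<le>X. \<bar>coeff (bp d) j\<bar>)"
        by (rule sum_mono, rule member_le_sum) (use True in auto)
      then show ?thesis unfolding BB_def using K e by (intro mult_left_mono) auto
    qed
    finally show ?thesis by (simp add: mult_ac)
  qed
  have "c 0 = f 0" using rep[of 0] by (simp add: sum.atMost_shift)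
  then show ?thesis using rep bnd by blast
qed



definition Bn :: "real \<Rightarrow> nat \<Rightarrow> nat \<Rightarrow> real" where
  "Bn p b c = real (b choose c) * p ^ (b - c) * (1 - p) ^ c"

definition hh :: "nat \<Rightarrow> nat \<Rightarrow> nat \<Rightarrow> real" where
  "hh n a m = real n / (real n - real a + real m + 1)"

definition eta :: "real \<Rightarrow> nat \<Rightarrow> nat \<Rightarrow> nat \<Rightarrow> real" where
  "eta p n a m = p * (real n + real m + 1) / (real n - real a + real m + 1) - 1"

definition RR :: "real \<Rightarrow> nat \<Rightarrow> nat \<Rightarrow> nat \<Rightarrow> real" where
  "RR p n a m = Bn p (n + m) a / Bn p n a"

definition hyp :: "real \<Rightarrow> real \<Rightarrow> nat \<Rightarrow> nat \<Rightarrow> real \<Rightarrow> bool" where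
  "hyp p C n a e \<longleftrightarrow> 0 < p \<and> p < 1 \<and> 0 < C \<and> 0 < n \<and> 0 \<le> e \<and> e \<le> 1 \<and> 1 / real n \<le> e ^ 2
     \<and> \<bar>real a - real n * (1 - p)\<bar> \<le> C * real n * e \<and> C * e \<le> p / 2"

lemma hyp_A: assumes "hyp p C n a e" shows "real n - real a \<ge> p * real n / 2"
proof -
  have "real a - real n * (1 - p) \<le> C * real n * e" using assms unfolding hyp_def by auto
  also have "C * real n * e \<le> p / 2 * real n" using assms unfolding hyp_def
    by (metis mult.commute mult.left_commute mult_right_mono of_nat_0_le_iff)
  finally show ?thesis by (simp add: algebra_simps)
qed

lemma hyp_basic: assumes "hyp p C n a e"
  shows "0 < p" "p < 1" "0 < C" "0 < real n" "0 \<le> e" "e \<le> 1" "1 / real n \<le> e" "1 / real n \<le> e ^ 2"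
    "a < n" "real n - real a > 0"
proof -
  show h: "0 < p" "p < 1" "0 < C" "0 < real n" "0 \<le> e" "e \<le> 1" "1 / real n \<le> e ^ 2"
    using assms unfolding hyp_def by auto
  have "e ^ 2 \<le> e" using h by (simp add: power2_eq_square mult_left_le)
  then show "1 / real n \<le> e" using h by linarith
  have "p * real n / 2 > 0" using h by simp
  then show "real n - real a > 0" using hyp_A[OF assms] by linarith
  then show "a < n" by simp
qed

lemma grd_mono: "grd e Y f q K I \<Longrightarrow> K \<le> K' \<Longrightarrow> e \<ge> 0 \<Longrightarrow> grd e Y f q K' I"
  unfolding grd_def by (meson order_trans mult_right_mono zero_le_power)

lemma grd_shift0: "grd e (Suc Y) f q K I \<Longrightarrow> grd e Y (\<lambda>m. f (Suc m)) q K I"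
  unfolding grd_def fdp_shift by auto

lemma fd_hh: assumes "hyp p C n a e" shows "fd (hh n a) = (\<lambda>m. (- 1 / real n) * (hh n a m * hh n a (Suc m)))"
proof
  fix m
  have A: "real n - real a > 0" "real n > 0" using hyp_basic[OF assms] by auto
  define D where "D = real n - real a + real m + 1"
  have D: "D > 0" using A by (simp add: D_def)
  have "fd (hh n a) m = real n / (D + 1) - real n / D" unfolding fd_def hh_def D_def by (simp add: algebra_simps)
  also have "\<dots> = (- 1 / real n) * ((real n / D) * (real n / (D + 1)))"
    using D A by (simp add: field_simps)
  finally show "fd (hh n a) m = (- 1 / real n) * (hh n a m * hh n a (Suc m))"
    unfolding hh_def D_def by (simp add: algebra_simps)
qed

lemma hh_grd: assumes "0 < p" shows "\<exists>K\<ge>0. \<forall>n a e. hyp p C n a e \<longrightarrow> (\<forall>Y. grd e Y (hh n a) 0 K I)"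
proof (induction I)
  case 0
  show ?case
  proof (intro exI[of _ "2 / p"] conjI allI impI)
    show "0 \<le> 2 / p" using assms by simp
    fix n a e Y assume H: "hyp p C n a e"
    note b = hyp_basic[OF H]
    show "grd e Y (hh n a) 0 (2 / p) 0" unfolding grd_def
    proof (intro allI impI)
      fix i m assume "i \<le> (0::nat)" "m + i \<le> Y"
      then have i: "i = 0" by simp
      have D: "real n - real a + real m + 1 \<ge> p * real n / 2" using hyp_A[OF H] by simp
      have "hh n a m \<le> real n / (p * real n / 2)"
        unfolding hh_def using b D by (intro divide_left_mono) auto
      also have "\<dots> = 2 / p" using b by (simp add: field_simps)
      finally show "\<bar>(fd ^^ i) (hh n a) m\<bar> \<le> 2 / p * e ^ (i + 0)"
        using i b unfolding hh_def by simp
    qed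
  qed
next
  case (Suc I)
  then obtain K where K: "K \<ge> 0" "\<And>n a e Y. hyp p C n a e \<Longrightarrow> grd e Y (hh n a) 0 K I" by blast
  show ?case
  proof (intro exI[of _ "max K (2 ^ I * K * K)"] conjI allI impI)
    show "0 \<le> max K (2 ^ I * K * K)" using K by simp
    fix n a e Y assume H: "hyp p C n a e"
    note b = hyp_basic[OF H]
    show "grd e Y (hh n a) 0 (max K (2 ^ I * K * K)) (Suc I)" unfolding grd_def
    proof (intro allI impI)
      fix i m assume i: "i \<le> Suc I" and m: "m + i \<le> Y"
      show "\<bar>(fd ^^ i) (hh n a) m\<bar> \<le> max K (2 ^ I * K * K) * e ^ (i + 0)"
      proof (cases "i \<le> I")
        case True
        then have "\<bar>(fd ^^ i) (hh n a) m\<bar> \<le> K * e ^ (i + 0)" using K(2)[OF H, of Y] m unfolding grd_def by auto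
        also have "\<dots> \<le> max K (2 ^ I * K * K) * e ^ (i + 0)" using b by (intro mult_right_mono) auto
        finally show ?thesis .
      next
        case False
        then have i: "i = Suc I" using i by simp
        have g1: "grd e (m + I) (hh n a) 0 K I" using K(2)[OF H] by blast
        have g2: "grd e (m + I) (\<lambda>m. hh n a (Suc m)) 0 K I" using K(2)[OF H] grd_shift0 by blast
        have pb: "\<bar>(fd ^^ I) (\<lambda>m. hh n a m * hh n a (Suc m)) m\<bar> \<le> 2 ^ I * K * K * e ^ (I + 0 + 0)"
          by (rule grd_prod[OF g1 g2]) (use K b in auto)
        have "(fd ^^ i) (hh n a) m = (- 1 / real n) * (fd ^^ I) (\<lambda>m. hh n a m * hh n a (Suc m)) m"
          unfolding i fdp_Suc fd_hh[OF H] fdp_cmult by simp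
        then have "\<bar>(fd ^^ i) (hh n a) m\<bar> = (1 / real n) * \<bar>(fd ^^ I) (\<lambda>m. hh n a m * hh n a (Suc m)) m\<bar>"
          using b by (simp add: abs_mult)
        also have "\<dots> \<le> e * (2 ^ I * K * K * e ^ I)"
          using pb b by (intro mult_mono) auto
        also have "\<dots> = 2 ^ I * K * K * e ^ (i + 0)" using i by (simp add: algebra_simps)
        also have "\<dots> \<le> max K (2 ^ I * K * K) * e ^ (i + 0)" using b by (intro mult_right_mono) auto
        finally show ?thesis .
      qed
    qed
  qed
qed



lemma eta_alt: assumes "hyp p C n a e"
  shows "eta p n a = (\<lambda>m. (p - 1) + (p * real a / real n) * hh n a m)"
proof
  fix m
  note b = hyp_basic[OF assms]
  define D where "D = real n - real a + real m + 1"
  have D: "D > 0" using b by (simp add: D_def)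
  have "eta p n a m = p * (D + real a) / D - 1" unfolding eta_def D_def by (simp add: algebra_simps)
  also have "\<dots> = (p - 1) + (p * real a / real n) * (real n / D)" using D b by (simp add: field_simps)
  finally show "eta p n a m = (p - 1) + (p * real a / real n) * hh n a m" unfolding hh_def D_def by simp
qed

lemma eta_grd: assumes p: "0 < p" "p < 1" and C: "C > 0"
  shows "\<exists>K\<ge>0. \<forall>n a e. hyp p C n a e \<longrightarrow> grd e X (eta p n a) 1 K I"
proof -
  obtain Kh where Kh: "Kh \<ge> 0" "\<And>n a e Y. hyp p C n a e \<Longrightarrow> grd e Y (hh n a) 0 Kh I"
    using hh_grd[OF p(1), of C I] by blast
  define K0 where "K0 = (2 * C + 2 * (real X + 1)) / p"
  define K where "K = max K0 (2 ^ I * Kh * Kh)"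
  have K0: "K0 \<ge> 0" using p C by (simp add: K0_def)
  show ?thesis
  proof (intro exI[of _ K] conjI allI impI)
    show "0 \<le> K" using K0 by (simp add: K_def)
    fix n a e assume H: "hyp p C n a e"
    note b = hyp_basic[OF H]
    show "grd e X (eta p n a) 1 K I" unfolding grd_def
    proof (intro allI impI)
      fix i m assume i: "i \<le> I" and m: "m + i \<le> X"
      show "\<bar>(fd ^^ i) (eta p n a) m\<bar> \<le> K * e ^ (i + 1)"
      proof (cases i)
        case 0
        define D where "D = real n - real a + real m + 1"
        have D: "D \<ge> p * real n / 2" using hyp_A[OF H] by (simp add: D_def)
        have Dp: "p * real n / 2 > 0" using b by simp
        have num: "p * (real n + real m + 1) - D = (real a - real n * (1 - p)) - (1 - p) * (real m + 1)"
          unfolding D_def by (simp add: algebra_simps)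
        have "\<bar>p * (real n + real m + 1) - D\<bar> \<le> C * real n * e + (real X + 1)"
        proof -
          have "(1 - p) * (real m + 1) \<le> real m + 1" using p by (intro mult_left_le_one_le) auto
          moreover have "0 \<le> (1 - p) * (real m + 1)" using p by simp
          moreover have "real m \<le> real X" using m by simp
          ultimately have "\<bar>(1 - p) * (real m + 1)\<bar> \<le> real X + 1" by linarith
          then show ?thesis unfolding num using H unfolding hyp_def by linarith
        qed
        have "eta p n a m = p * (real n + real m + 1) / D - 1" by (simp add: eta_def D_def)
        also have "\<dots> = (p * (real n + real m + 1) - D) / D" using D Dp by (simp add: field_simps)
        finally have "eta p n a m = (p * (real n + real m + 1) - D) / D" .
        then have "\<bar>eta p n a m\<bar> = \<bar>p * (real n + real m + 1) - D\<bar> / D" using D Dp by simp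
        also have "\<dots> \<le> (C * real n * e + (real X + 1)) / (p * real n / 2)"
          by (rule frac_le) (use D Dp \<open>\<bar>p * (real n + real m + 1) - D\<bar> \<le> C * real n * e + (real X + 1)\<close> in auto)
        also have "\<dots> = (2 * C / p) * e + (2 * (real X + 1) / p) * (1 / real n)"
          using b by (simp add: field_simps)
        also have "\<dots> \<le> (2 * C / p) * e + (2 * (real X + 1) / p) * e"
          using b p by (intro add_left_mono mult_left_mono) auto
        also have "\<dots> = K0 * e" unfolding K0_def using p by (simp add: field_simps)
        also have "\<dots> \<le> K * e" unfolding K_def using b by (intro mult_right_mono) auto
        finally show ?thesis using 0 by simp
      next
        case (Suc i')
        have "(fd ^^ i) (eta p n a) = (fd ^^ i) (\<lambda>m. (p - 1) + (p * real a / real n) * hh n a m)"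
          by (simp add: eta_alt[OF H])
        also have "\<dots> = (\<lambda>m. (fd ^^ i) (\<lambda>m. p - 1) m + (fd ^^ i) (\<lambda>m. (p * real a / real n) * hh n a m) m)"
          by (rule fdp_add)
        also have "\<dots> = (\<lambda>m. (p * real a / real n) * (fd ^^ i) (hh n a) m)"
          using fdp_const[of i "p - 1"] Suc by (simp only: fdp_cmult) simp
        finally have e1: "(fd ^^ i) (eta p n a) m = (p * real a / real n) * (fd ^^ i) (hh n a) m" by simp
        have g1: "grd e (m + i') (hh n a) 0 Kh I" using Kh(2)[OF H] by blast
        have g2: "grd e (m + i') (\<lambda>m. hh n a (Suc m)) 0 Kh I" using Kh(2)[OF H] grd_shift0 by blast
        have g1': "grd e (m + i') (hh n a) 0 Kh i'" using g1 Suc i unfolding grd_def by auto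
        have g2': "grd e (m + i') (\<lambda>m. hh n a (Suc m)) 0 Kh i'" using g2 Suc i unfolding grd_def by auto
        have pb: "\<bar>(fd ^^ i') (\<lambda>m. hh n a m * hh n a (Suc m)) m\<bar> \<le> 2 ^ i' * Kh * Kh * e ^ (i' + 0 + 0)"
          by (rule grd_prod[OF g1' g2']) (use Kh b in auto)
        have "(fd ^^ i) (hh n a) m = (- 1 / real n) * (fd ^^ i') (\<lambda>m. hh n a m * hh n a (Suc m)) m"
          unfolding Suc fdp_Suc fd_hh[OF H] fdp_cmult by simp
        then have "\<bar>(fd ^^ i) (hh n a) m\<bar> = (1 / real n) * \<bar>(fd ^^ i') (\<lambda>m. hh n a m * hh n a (Suc m)) m\<bar>"
          using b by (simp add: abs_mult)
        also have "\<dots> \<le> e ^ 2 * (2 ^ i' * Kh * Kh * e ^ i')"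
          using pb b by (intro mult_mono) auto
        also have "\<dots> = 2 ^ i' * Kh * Kh * e ^ (i + 1)" using Suc by (simp add: algebra_simps power_add power2_eq_square)
        finally have hb: "\<bar>(fd ^^ i) (hh n a) m\<bar> \<le> 2 ^ i' * Kh * Kh * e ^ (i + 1)" .
        have pa: "0 \<le> p * real a / real n" "p * real a / real n \<le> 1"
        proof -
          show "0 \<le> p * real a / real n" using b by simp
          have "p * real a \<le> 1 * real n" using b by (intro mult_mono) auto
          then show "p * real a / real n \<le> 1" using b by simp
        qed
        have "\<bar>(fd ^^ i) (eta p n a) m\<bar> = (p * real a / real n) * \<bar>(fd ^^ i) (hh n a) m\<bar>"
          using e1 pa b by (simp add: abs_mult)
        also have "\<dots> \<le> 1 * (2 ^ i' * Kh * Kh * e ^ (i + 1))"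
          using pa hb by (intro mult_mono) auto
        also have "\<dots> \<le> 2 ^ I * Kh * Kh * e ^ (i + 1)"
        proof -
          have "(2::real) ^ i' \<le> 2 ^ I" using Suc i by (intro power_increasing) auto
          then have t: "(2::real) ^ i' * (Kh * Kh) \<le> 2 ^ I * (Kh * Kh)" using Kh by (intro mult_right_mono) auto
          have "(2::real) ^ i' * (Kh * Kh) * e ^ (i + 1) \<le> 2 ^ I * (Kh * Kh) * e ^ (i + 1)"
            using mult_right_mono[OF t, of "e ^ (i + 1)"] b by simp
          then show ?thesis by (simp only: mult.assoc mult_1_left)
        qed
        also have "\<dots> \<le> K * e ^ (i + 1)" unfolding K_def using b by (intro mult_right_mono) auto
        finally show ?thesis .
      qed
    qed
  qed
qed



lemma Bn_pos: "a \<le> N \<Longrightarrow> 0 < p \<Longrightarrow> p < 1 \<Longrightarrow> Bn p N a > 0"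
  unfolding Bn_def by simp

lemma Bn_Suc: assumes "a \<le> N"
  shows "Bn p (Suc N) a = Bn p N a * (p * (real N + 1) / (real N + 1 - real a))"
proof -
  have c: "real (Suc N - a) * real (Suc N choose a) = real (Suc N) * real (N choose a)"
    using binomial_absorb_comp[of "Suc N" a] by (metis diff_Suc_1 of_nat_mult)
  have d: "real N + 1 - real a > 0" using assms by simp
  have e: "real (Suc N - a) = real N + 1 - real a" using assms by (simp add: of_nat_diff)
  have f: "p ^ (Suc N - a) = p * p ^ (N - a)" using assms by (simp add: Suc_diff_le)
  have "real (Suc N choose a) = real (Suc N) * real (N choose a) / (real N + 1 - real a)"
    using c d e by (simp add: field_simps)
  then have "Bn p (Suc N) a = (real (Suc N) * real (N choose a) / (real N + 1 - real a)) * (p * p ^ (N - a)) * (1 - p) ^ a"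
    unfolding Bn_def f by simp
  also have "\<dots> = (real (N choose a) * p ^ (N - a) * (1 - p) ^ a) * (p * (real N + 1) / (real N + 1 - real a))"
    by (simp add: field_simps)
  finally show ?thesis unfolding Bn_def .
qed

lemma RR_Suc: assumes H: "hyp p C n a e"
  shows "RR p n a (Suc m) = RR p n a m * (1 + eta p n a m)"
proof -
  note b = hyp_basic[OF H]
  have "a \<le> n + m" using b by simp
  from Bn_Suc[OF this, of p]
  have "Bn p (n + Suc m) a = Bn p (n + m) a * (p * (real n + real m + 1) / (real n - real a + real m + 1))"
    by (simp add: algebra_simps)
  then show ?thesis unfolding RR_def eta_def by simp
qed

lemma fd_RR: assumes H: "hyp p C n a e"
  shows "fd (RR p n a) = (\<lambda>m. RR p n a m * eta p n a m)"
  by (rule ext) (simp add: fd_def RR_Suc[OF H] algebra_simps)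

lemma eta_ge: assumes H: "hyp p C n a e" shows "1 + eta p n a m \<ge> 0"
proof -
  note b = hyp_basic[OF H]
  have "real n - real a + real m + 1 > 0" using b by simp
  then show ?thesis unfolding eta_def using b by simp
qed

lemma RR_0: assumes H: "hyp p C n a e" shows "RR p n a 0 = 1"
proof -
  note b = hyp_basic[OF H]
  have "Bn p n a > 0" using b by (intro Bn_pos) auto
  then show ?thesis unfolding RR_def by simp
qed

lemma RR_nonneg: assumes H: "hyp p C n a e" shows "RR p n a m \<ge> 0"
  using hyp_basic[OF H] unfolding RR_def Bn_def by simp

lemma RR_grd: assumes p: "0 < p" "p < 1" and C: "C > 0"
  shows "\<exists>K\<ge>0. \<forall>n a e. hyp p C n a e \<longrightarrow> grd e X (RR p n a) 0 K I"
proof (induction I)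
  case 0
  obtain Ke where Ke: "Ke \<ge> 0" "\<And>n a e. hyp p C n a e \<Longrightarrow> grd e X (eta p n a) 1 Ke 0"
    using eta_grd[OF p C, of X 0] by blast
  show ?case
  proof (intro exI[of _ "(1 + Ke) ^ X"] conjI allI impI)
    show "0 \<le> (1 + Ke) ^ X" using Ke by simp
    fix n a e assume H: "hyp p C n a e"
    note b = hyp_basic[OF H]
    have eb: "\<bar>eta p n a m\<bar> \<le> Ke" if "m \<le> X" for m
    proof -
      have "\<bar>eta p n a m\<bar> \<le> Ke * e ^ 1" using Ke(2)[OF H] that unfolding grd_def by fastforce
      also have "\<dots> \<le> Ke * 1" using b Ke by (intro mult_left_mono) auto
      finally show ?thesis by simp
    qed
    have rb: "RR p n a m \<le> (1 + Ke) ^ m" if "m \<le> X" for m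
      using that
    proof (induction m)
      case 0 then show ?case using RR_0[OF H] by simp
    next
      case (Suc m)
      have "RR p n a (Suc m) = RR p n a m * (1 + eta p n a m)" by (rule RR_Suc[OF H])
      also have "\<dots> \<le> (1 + Ke) ^ m * (1 + Ke)"
        using Suc eb[of m] RR_nonneg[OF H, of m] eta_ge[OF H, of m] by (intro mult_mono) auto
      finally show ?case by (simp add: mult.commute)
    qed
    show "grd e X (RR p n a) 0 ((1 + Ke) ^ X) 0" unfolding grd_def
    proof (intro allI impI)
      fix i m assume "i \<le> (0::nat)" "m + i \<le> X"
      then have i: "i = 0" "m \<le> X" by auto
      have "RR p n a m \<le> (1 + Ke) ^ m" using rb i by auto
      also have "\<dots> \<le> (1 + Ke) ^ X" using Ke i by (intro power_increasing) auto
      finally show "\<bar>(fd ^^ i) (RR p n a) m\<bar> \<le> (1 + Ke) ^ X * e ^ (i + 0)"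
        using i RR_nonneg[OF H, of m] by simp
    qed
  qed
next
  case (Suc I)
  then obtain K where K: "K \<ge> 0" "\<And>n a e. hyp p C n a e \<Longrightarrow> grd e X (RR p n a) 0 K I" by blast
  obtain Ke where Ke: "Ke \<ge> 0" "\<And>n a e. hyp p C n a e \<Longrightarrow> grd e X (eta p n a) 1 Ke I"
    using eta_grd[OF p C, of X I] by blast
  show ?case
  proof (intro exI[of _ "max K (2 ^ I * K * Ke)"] conjI allI impI)
    show "0 \<le> max K (2 ^ I * K * Ke)" using K by simp
    fix n a e assume H: "hyp p C n a e"
    note b = hyp_basic[OF H]
    show "grd e X (RR p n a) 0 (max K (2 ^ I * K * Ke)) (Suc I)" unfolding grd_def
    proof (intro allI impI)
      fix i m assume i: "i \<le> Suc I" and m: "m + i \<le> X"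
      show "\<bar>(fd ^^ i) (RR p n a) m\<bar> \<le> max K (2 ^ I * K * Ke) * e ^ (i + 0)"
      proof (cases "i \<le> I")
        case True
        then have "\<bar>(fd ^^ i) (RR p n a) m\<bar> \<le> K * e ^ (i + 0)" using K(2)[OF H] m unfolding grd_def by auto
        also have "\<dots> \<le> max K (2 ^ I * K * Ke) * e ^ (i + 0)" using b by (intro mult_right_mono) auto
        finally show ?thesis .
      next
        case False
        then have i: "i = Suc I" using i by simp
        have pb: "\<bar>(fd ^^ I) (\<lambda>m. RR p n a m * eta p n a m) m\<bar> \<le> 2 ^ I * K * Ke * e ^ (I + 0 + 1)"
          by (rule grd_prod[OF K(2)[OF H] Ke(2)[OF H]]) (use K Ke b m i in auto)
        have "(fd ^^ i) (RR p n a) m = (fd ^^ I) (\<lambda>m. RR p n a m * eta p n a m) m"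
          unfolding i fdp_Suc fd_RR[OF H] by simp
        then have "\<bar>(fd ^^ i) (RR p n a) m\<bar> \<le> 2 ^ I * K * Ke * e ^ (i + 0)" using pb i by simp
        also have "\<dots> \<le> max K (2 ^ I * K * Ke) * e ^ (i + 0)" using b by (intro mult_right_mono) auto
        finally show ?thesis .
      qed
    qed
  qed
qed

lemma RR_poly: assumes p: "0 < p" "p < 1" and C: "C > 0"
  shows "\<exists>K\<ge>0. \<forall>n a e. hyp p C n a e \<longrightarrow> (\<exists>c. (\<forall>m\<le>X. RR p n a m = (\<Sum>j\<le>X. c j * real m ^ j))
            \<and> (\<forall>j. \<bar>c j\<bar> \<le> K * e ^ j) \<and> c 0 = 1)"
proof -
  obtain K where K: "K \<ge> 0" "\<And>n a e. hyp p C n a e \<Longrightarrow> grd e X (RR p n a) 0 K X"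
    using RR_grd[OF p C, of X X] by blast
  have BB: "BB X \<ge> 0" unfolding BB_def by (simp add: sum_nonneg)
  show ?thesis
  proof (intro exI[of _ "K * BB X"] conjI allI impI)
    show "0 \<le> K * BB X" using K BB by simp
    fix n a e assume H: "hyp p C n a e"
    note b = hyp_basic[OF H]
    from interp[OF K(2)[OF H] b(5) b(6) K(1)] RR_0[OF H]
    show "\<exists>c. (\<forall>m\<le>X. RR p n a m = (\<Sum>j\<le>X. c j * real m ^ j)) \<and> (\<forall>j. \<bar>c j\<bar> \<le> K * BB X * e ^ j) \<and> c 0 = 1"
      by metis
  qed
qed



definition Eg :: "real \<Rightarrow> bool list \<Rightarrow> (bool list \<Rightarrow> real) \<Rightarrow> real" where
  "Eg p w g = (\<Sum>K\<in>Pow {0..<length w}. p ^ (length w - card K) * (1 - p) ^ card K * g (nths w K))"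

lemma Pow_Suc: "Pow {0..<Suc n} = (image Suc) ` Pow {0..<n} \<union> (\<lambda>K. insert 0 (Suc ` K)) ` Pow {0..<n}"
proof (rule equalityI)
  show "Pow {0..<Suc n} \<subseteq> (image Suc) ` Pow {0..<n} \<union> (\<lambda>K. insert 0 (Suc ` K)) ` Pow {0..<n}"
  proof
    fix K assume K: "K \<in> Pow {0..<Suc n}"
    define K' where "K' = {j. Suc j \<in> K}"
    have K'1: "K' \<in> Pow {0..<n}" using K unfolding K'_def by auto
    have e: "K - {0} = Suc ` K'" unfolding K'_def
    proof (rule set_eqI)
      fix x show "x \<in> K - {0} \<longleftrightarrow> x \<in> Suc ` {j. Suc j \<in> K}"
        by (cases x) auto
    qed
    show "K \<in> (image Suc) ` Pow {0..<n} \<union> (\<lambda>K. insert 0 (Suc ` K)) ` Pow {0..<n}"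
    proof (cases "0 \<in> K")
      case True
      then have "K = insert 0 (Suc ` K')" using e by blast
      then have "K \<in> (\<lambda>K. insert 0 (Suc ` K)) ` Pow {0..<n}" using K'1 by (rule image_eqI)
      then show ?thesis by (rule UnI2)
    next
      case False
      then have "K = Suc ` K'" using e by blast
      then have "K \<in> (image Suc) ` Pow {0..<n}" using K'1 by (rule image_eqI)
      then show ?thesis by (rule UnI1)
    qed
  qed
  show "(image Suc) ` Pow {0..<n} \<union> (\<lambda>K. insert 0 (Suc ` K)) ` Pow {0..<n} \<subseteq> Pow {0..<Suc n}"
    by auto
qed

lemma Eg_Nil: "Eg p [] g = g []"
  unfolding Eg_def by simp

lemma Eg_Cons: "Eg p (b # w) g = p * Eg p w g + (1 - p) * Eg p w (\<lambda>v. g (b # v))"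
proof -
  let ?n = "length w"
  let ?F = "\<lambda>K. p ^ (Suc ?n - card K) * (1 - p) ^ card K * g (nths (b # w) K)"
  have inj1: "inj_on (image Suc) (Pow {0..<?n})" by (meson inj_Suc inj_image_eq_iff inj_onI)
  have inj2: "inj_on (\<lambda>K. insert 0 (Suc ` K)) (Pow {0..<?n})"
  proof (rule inj_onI)
    fix A B assume "insert 0 (Suc ` A) = insert (0::nat) (Suc ` B)"
    then have "Suc ` A = Suc ` B" by (metis Zero_not_Suc image_iff insert_ident)
    then show "A = B" by (meson inj_Suc inj_image_eq_iff)
  qed
  have disj: "(image Suc) ` Pow {0..<?n} \<inter> (\<lambda>K. insert 0 (Suc ` K)) ` Pow {0..<?n} = {}" by auto
  have s1: "nths (b # w) (Suc ` K) = nths w K" for K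
  proof -
    have "{j. Suc j \<in> Suc ` K} = K" by auto
    then show ?thesis by (simp add: nths_Cons)
  qed
  have s2: "nths (b # w) (insert 0 (Suc ` K)) = b # nths w K" for K
  proof -
    have "{j. Suc j \<in> insert 0 (Suc ` K)} = K" by auto
    then show ?thesis by (simp add: nths_Cons)
  qed
  have c: "card K \<le> ?n" if "K \<in> Pow {0..<?n}" for K
    using that card_mono[of "{0..<?n}" K] by auto
  have "Eg p (b # w) g = sum ?F (Pow {0..<Suc ?n})" unfolding Eg_def by simp
  also have "\<dots> = sum ?F ((image Suc) ` Pow {0..<?n}) + sum ?F ((\<lambda>K. insert 0 (Suc ` K)) ` Pow {0..<?n})"
    unfolding Pow_Suc by (rule sum.union_disjoint) (use disj in auto)
  also have "sum ?F ((image Suc) ` Pow {0..<?n}) = (\<Sum>K\<in>Pow {0..<?n}. p * (p ^ (?n - card K) * (1 - p) ^ card K * g (nths w K)))"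
    apply (subst sum.reindex[OF inj1])
    apply (rule sum.cong[OF refl])
    subgoal for K using c[of K] by (simp add: s1 card_image Suc_diff_le)
    done
  also have "sum ?F ((\<lambda>K. insert 0 (Suc ` K)) ` Pow {0..<?n}) = (\<Sum>K\<in>Pow {0..<?n}. (1 - p) * (p ^ (?n - card K) * (1 - p) ^ card K * g (b # nths w K)))"
    apply (subst sum.reindex[OF inj2])
    apply (rule sum.cong[OF refl])
    subgoal for K
    proof -
      assume K: "K \<in> Pow {0..<?n}"
      have f: "finite K" using K finite_subset by auto
      have "card (insert 0 (Suc ` K)) = Suc (card K)" using f by (simp add: card_image)
      then show ?thesis using c[OF K] by (simp add: s2)
    qed
    done
  finally show ?thesis unfolding Eg_def by (simp add: sum_distrib_left)
qed

fun Dr :: "real \<Rightarrow> bool list \<Rightarrow> bool list \<Rightarrow> real" where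
  "Dr p [] v = (if v = [] then 1 else 0)"
| "Dr p (b # w) v = p * Dr p w v + (1 - p) * (case v of [] \<Rightarrow> 0 | c # v' \<Rightarrow> if c = b then Dr p w v' else 0)"

lemma Eg_Dr: "Eg p w (\<lambda>v. if v = u then 1 else 0) = Dr p w u"
proof (induction w arbitrary: u)
  case Nil then show ?case by (simp add: Eg_Nil)
next
  case (Cons b w)
  have "Eg p w (\<lambda>v. if b # v = u then 1 else 0) = (case u of [] \<Rightarrow> 0 | c # v' \<Rightarrow> if c = b then Dr p w v' else 0)"
  proof (cases u)
    case Nil then show ?thesis by (simp add: Eg_def)
  next
    case (Cons c v')
    then show ?thesis using Cons.IH[of v'] by (cases "c = b") (auto simp: Eg_def)
  qed
  then show ?case by (simp add: Eg_Cons Cons.IH)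
qed

definition ones :: "bool list \<Rightarrow> nat" where "ones v = length (filter id v)"

lemma ones_simps[simp]: "ones [] = 0" "ones (True # v) = Suc (ones v)" "ones (False # v) = ones v"
  "ones (u @ v) = ones u + ones v" "ones (replicate c False) = 0"
  unfolding ones_def by auto

lemma ones_rotate[simp]: "ones (rotate s v) = ones v"
proof -
  have "ones (rotate s v) = ones (drop (s mod length v) v @ take (s mod length v) v)" by (simp add: rotate_drop_take)
  also have "\<dots> = ones (take (s mod length v) v @ drop (s mod length v) v)" by (simp only: ones_simps(4) add.commute)
  finally show ?thesis by simp
qed

lemma Dr_zero: "ones w < ones v \<Longrightarrow> Dr p w v = 0"
proof (induction w arbitrary: v)
  case Nil then show ?case by (auto simp: ones_def)
next
  case (Cons b w)
  have a: "Dr p w v = 0" using Cons by (cases b) auto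
  have c: "(case v of [] \<Rightarrow> 0 | c # v' \<Rightarrow> if c = b then Dr p w v' else 0) = 0"
  proof (cases v)
    case (Cons c v')
    show ?thesis
    proof (cases "c = b")
      case True
      then have "ones w < ones v'" using Cons.prems \<open>v = c # v'\<close> by (cases b) auto
      then show ?thesis using Cons.IH True \<open>v = c # v'\<close> by simp
    qed (simp add: Cons)
  qed simp
  show ?case using a c by simp
qed

lemma ones_blocks[simp]: "ones (blocks bs) = length bs"
  by (induction bs) (auto simp: blocks_def)

lemma blocks_Cons: "blocks (b # bs) = True # replicate b False @ blocks bs"
  by (simp add: blocks_def)

lemma blocks_Nil[simp]: "blocks [] = []" by (simp add: blocks_def)

lemma blocks_append: "blocks (as @ bs) = blocks as @ blocks bs" by (simp add: blocks_def)

lemma Dr_hdF: assumes "length bs \<le> ones v"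
  shows "Dr p (blocks bs) (False # v) = 0"
proof (cases bs)
  case Nil then show ?thesis by simp
next
  case (Cons b bs')
  have "Dr p (replicate b False @ blocks bs') (False # v) = 0"
    by (rule Dr_zero) (use assms Cons in simp)
  then show ?thesis using Cons by (simp add: blocks_Cons)
qed

lemma Bn_rec: "Bn p (Suc b) (Suc c) = p * Bn p b (Suc c) + (1 - p) * Bn p b c"
proof (cases "c < b")
  case True
  have "p ^ (b - c) = p * p ^ (b - Suc c)" using True by (metis Suc_diff_Suc power_Suc)
  then show ?thesis unfolding Bn_def using True by (simp add: algebra_simps)
next
  case False
  show ?thesis
  proof (cases "c = b")
    case True then show ?thesis unfolding Bn_def by simp
  next
    case False
    then show ?thesis using \<open>\<not> c < b\<close> unfolding Bn_def by (simp add: binomial_eq_0)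
  qed
qed

lemma Dr_rep: assumes "length bs = length cs"
  shows "Dr p (replicate b False @ blocks bs) (replicate c False @ blocks cs) = Bn p b c * Dr p (blocks bs) (blocks cs)"
proof (induction b arbitrary: c)
  case 0
  show ?case
  proof (cases c)
    case 0 then show ?thesis by (simp add: Bn_def)
  next
    case (Suc c')
    have "Dr p (blocks bs) (False # replicate c' False @ blocks cs) = 0"
      by (rule Dr_hdF) (use assms in simp)
    then show ?thesis using Suc by (simp add: Bn_def)
  qed
next
  case (Suc b)
  show ?case
  proof (cases c)
    case 0
    have "(case blocks cs of [] \<Rightarrow> 0 | c # v' \<Rightarrow> if c = False then Dr p (replicate b False @ blocks bs) v' else 0) = 0"
      by (cases cs) (auto simp: blocks_Cons)
    then show ?thesis using Suc.IH[of 0] 0 by (simp add: Bn_def)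
  next
    case (Suc c')
    show ?thesis using Suc.IH[of c] Suc.IH[of c'] Suc by (simp add: Bn_rec algebra_simps)
  qed
qed

lemma Dr_blocks: "length bs = length cs \<Longrightarrow>
   Dr p (blocks bs) (blocks cs) = (\<Prod>j<length bs. (1 - p) * Bn p (bs ! j) (cs ! j))"
proof (induction bs arbitrary: cs)
  case Nil then show ?case by simp
next
  case (Cons b bs)
  then obtain c cs' where cs: "cs = c # cs'" "length bs = length cs'" by (cases cs) auto
  have z: "Dr p (replicate b False @ blocks bs) (True # replicate c False @ blocks cs') = 0"
    by (rule Dr_zero) (use cs in simp)
  have "Dr p (blocks (b # bs)) (blocks cs) = (1 - p) * (Bn p b c * Dr p (blocks bs) (blocks cs'))"
    using z Dr_rep[OF cs(2), of p b c] by (simp add: cs blocks_Cons)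
  also have "\<dots> = (\<Prod>j<length (b # bs). (1 - p) * Bn p ((b # bs) ! j) (cs ! j))"
    using Cons.IH[OF cs(2)] by (simp add: prod.lessThan_Suc_shift cs del: prod.lessThan_Suc)
  finally show ?case .
qed



lemma csp_sum: assumes "u \<noteq> []"
  shows "cyc_shift_prob v u = (\<Sum>s<length u. if rotate s u = v then 1 else 0) / real (length u)"
proof (cases "v = []")
  case True
  have "rotate s u \<noteq> []" for s using assms by simp
  then show ?thesis using True assms by (simp add: cyc_shift_prob_def)
next
  case False
  show ?thesis
  proof (cases "length v = length u")
    case False
    have a: "{s. s < length v \<and> rotate s v = u} = {}" using False by (auto dest: arg_cong[of _ _ length])
    have b: "rotate s u \<noteq> v" for s using False by (auto dest: arg_cong[of _ _ length])
    show ?thesis using \<open>v \<noteq> []\<close> a b by (simp add: cyc_shift_prob_def)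
  next
    case True
    define L where "L = length u"
    have L: "L > 0" using assms L_def by simp
    have "card {s. s < L \<and> rotate s v = u} = card {s. s < L \<and> rotate s u = v}"
    proof (rule bij_betw_same_card[of "\<lambda>s. (L - s) mod L"], rule bij_betw_byWitness[of _ "\<lambda>s. (L - s) mod L"])
      have inv: "(L - (L - s) mod L) mod L = s" if "s < L" for s
      proof (cases "s = 0")
        case True then show ?thesis by simp
      next
        case False then show ?thesis using that by (simp add: mod_if)
      qed
      have rot: "rotate ((L - s) mod L) (rotate s x) = x" if "length x = L" "s < L" for s x
      proof -
        have "rotate ((L - s) mod L) (rotate s x) = rotate ((L - s) mod L + s) x" by (simp add: rotate_rotate)
        moreover have "((L - s) mod L + s) mod length x = 0" using that
          by (metis add.commute le_add_diff_inverse less_imp_le mod_add_right_eq mod_self)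
        ultimately show ?thesis by simp
      qed
      show "\<forall>a\<in>{s. s < L \<and> rotate s v = u}. (L - (L - a) mod L) mod L = a" using inv by auto
      show "\<forall>a\<in>{s. s < L \<and> rotate s u = v}. (L - (L - a) mod L) mod L = a" using inv by auto
      show "(\<lambda>s. (L - s) mod L) ` {s. s < L \<and> rotate s v = u} \<subseteq> {s. s < L \<and> rotate s u = v}"
      proof
        fix s' assume "s' \<in> (\<lambda>s. (L - s) mod L) ` {s. s < L \<and> rotate s v = u}"
        then obtain s where s: "s < L" "rotate s v = u" "s' = (L - s) mod L" by blast
        have "rotate s' u = v" using rot[of v s] s True L_def by simp
        moreover have "s' < L" using s L by simp
        ultimately show "s' \<in> {s. s < L \<and> rotate s u = v}" by simp
      qed
      show "(\<lambda>s. (L - s) mod L) ` {s. s < L \<and> rotate s u = v} \<subseteq> {s. s < L \<and> rotate s v = u}"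
      proof
        fix s' assume "s' \<in> (\<lambda>s. (L - s) mod L) ` {s. s < L \<and> rotate s u = v}"
        then obtain s where s: "s < L" "rotate s u = v" "s' = (L - s) mod L" by blast
        have "rotate s' v = u" using rot[of u s] s L_def by simp
        moreover have "s' < L" using s L by simp
        ultimately show "s' \<in> {s. s < L \<and> rotate s v = u}" by simp
      qed
    qed
    also have "\<dots> = (\<Sum>s<L. if rotate s u = v then 1 else 0)"
      by (simp add: sum.If_cases Int_def)
    finally have cs: "card {s. s < L \<and> rotate s v = u} = (\<Sum>s<L. if rotate s u = v then 1 else 0)" .
    have "real (card {s. s < L \<and> rotate s v = u}) = (\<Sum>s<L. real (if rotate s u = v then 1 else 0))"
      unfolding cs by (rule of_nat_sum)
    also have "\<dots> = (\<Sum>s<L. if rotate s u = v then 1 else 0)" by (rule sum.cong) auto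
    finally show ?thesis using \<open>v \<noteq> []\<close> True unfolding cyc_shift_prob_def L_def by simp
  qed
qed

lemma del_prob_Dr: assumes "u \<noteq> []"
  shows "del_prob p w u = (\<Sum>s<length u. Dr p w (rotate s u)) / real (length u)"
proof -
  let ?L = "real (length u)"
  let ?P = "Pow {0..<length w}"
  let ?wt = "\<lambda>K. p ^ (length w - card K) * (1 - p) ^ card K"
  have "del_prob p w u = (\<Sum>K\<in>?P. ?wt K * ((\<Sum>s<length u. if rotate s u = nths w K then 1 else 0) / ?L))"
    unfolding del_prob_def csp_sum[OF assms] by simp
  also have "\<dots> = (\<Sum>K\<in>?P. \<Sum>s<length u. ?wt K * (if rotate s u = nths w K then 1 else 0)) / ?L"
    by (simp only: sum_divide_distrib[symmetric] sum_distrib_left times_divide_eq_right)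
  also have "(\<Sum>K\<in>?P. \<Sum>s<length u. ?wt K * (if rotate s u = nths w K then 1 else 0))
      = (\<Sum>s<length u. \<Sum>K\<in>?P. ?wt K * (if rotate s u = nths w K then 1 else 0))"
    by (rule sum.swap)
  also have "\<dots> = (\<Sum>s<length u. Dr p w (rotate s u))"
  proof (rule sum.cong[OF refl])
    fix s
    have "(\<lambda>v. if rotate s u = v then 1 else (0::real)) = (\<lambda>v. if v = rotate s u then 1 else 0)"
      by (rule ext) auto
    then have "Dr p w (rotate s u) = Eg p w (\<lambda>v. if rotate s u = v then 1 else 0)" by (simp add: Eg_Dr)
    then show "(\<Sum>K\<in>?P. ?wt K * (if rotate s u = nths w K then 1 else 0)) = Dr p w (rotate s u)"
      by (simp add: Eg_def)
  qed
  finally show ?thesis .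
qed

lemma sum_split0: "(\<Sum>s<S + l. f s) = (\<Sum>s<S. f s) + (\<Sum>t<l. f (S + t))" for S l :: nat and f :: "nat \<Rightarrow> 'a::comm_monoid_add"
  by (induction l) (auto simp: add.assoc)

lemma sum_split: "(\<Sum>s<(\<Sum>r<k. l r). f s) = (\<Sum>r<k. \<Sum>t<l r. f ((\<Sum>i<r. l i) + t))" for k :: nat and l :: "nat \<Rightarrow> nat"
  by (induction k) (auto simp: sum_split0)

lemma length_blocks: "length (blocks xs) = (\<Sum>i<length xs. Suc (xs ! i))"
  by (induction xs) (auto simp: blocks_Cons sum.lessThan_Suc_shift simp del: sum.lessThan_Suc)

lemma off_blocks: "r \<le> length as \<Longrightarrow> length (blocks (take r as)) = (\<Sum>i<r. Suc (as ! i))"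
  unfolding length_blocks by (simp add: min_def)

lemma rot_blocks: assumes "r < length as"
  shows "rotate (length (blocks (take r as))) (blocks as) = blocks (rotate r as)"
proof -
  have "blocks as = blocks (take r as) @ blocks (drop r as)" by (simp add: blocks_append[symmetric])
  then have "rotate (length (blocks (take r as))) (blocks as) = blocks (drop r as) @ blocks (take r as)"
    by (simp add: rotate_append)
  also have "\<dots> = blocks (rotate r as)" using assms by (simp add: blocks_append[symmetric] rotate_drop_take)
  finally show ?thesis .
qed

lemma rotate_Cons_nth: assumes "r < length as"
  shows "rotate r as = as ! r # (drop (Suc r) as @ take r as)"
  using assms by (simp add: rotate_drop_take Cons_nth_drop_Suc)

lemma Dr_rot_zero: assumes "length bs \<le> length cs" "1 \<le> t" "t \<le> cs ! r" "r < length cs"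
  shows "Dr p (blocks bs) (rotate t (blocks (rotate r cs))) = 0"
proof -
  define W where "W = blocks (drop (Suc r) cs @ take r cs)"
  define V where "V = True # replicate (cs ! r) False @ W"
  have V: "blocks (rotate r cs) = V" unfolding V_def W_def using assms(4)
    by (simp add: rotate_Cons_nth blocks_Cons)
  have tl: "t < length V" using assms unfolding V_def by simp
  have "hd (rotate t V) = V ! t" using tl by (simp add: hd_rotate_conv_nth V_def)
  also have "\<dots> = False" using assms unfolding V_def by (cases t) (auto simp: nth_append)
  finally have h: "hd (rotate t V) = False" .
  have ne: "rotate t V \<noteq> []" by (simp add: V_def)
  then obtain rest where r: "rotate t V = False # rest" using h by (cases "rotate t V") auto
  have "ones (rotate t V) = length cs" using V[symmetric] by simp
  then have "length bs \<le> ones rest" using r assms by simp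
  then show ?thesis using V r Dr_hdF by simp
qed

lemma del_formula: assumes "length bs = length as" "length as > 0"
  shows "del_prob p (blocks bs) (blocks as) =
    (\<Sum>r<length as. \<Prod>j<length as. (1 - p) * Bn p (bs ! j) (as ! ((r + j) mod length as))) / real (length (blocks as))"
proof -
  let ?k = "length as"
  let ?u = "blocks as"
  have ne: "?u \<noteq> []" using assms by (cases as) (auto simp: blocks_Cons)
  have "(\<Sum>s<length ?u. Dr p (blocks bs) (rotate s ?u))
      = (\<Sum>r<?k. \<Sum>t<Suc (as ! r). Dr p (blocks bs) (rotate ((\<Sum>i<r. Suc (as ! i)) + t) ?u))"
    unfolding length_blocks[of as] by (rule sum_split)
  also have "\<dots> = (\<Sum>r<?k. Dr p (blocks bs) (blocks (rotate r as)))"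
  proof (rule sum.cong[OF refl])
    fix r assume r: "r \<in> {..<?k}"
    have off: "(\<Sum>i<r. Suc (as ! i)) = length (blocks (take r as))" using r off_blocks by simp
    have rr: "rotate ((\<Sum>i<r. Suc (as ! i)) + t) ?u = rotate t (blocks (rotate r as))" for t
    proof -
      have "rotate ((\<Sum>i<r. Suc (as ! i)) + t) ?u = rotate t (rotate (length (blocks (take r as))) ?u)"
        unfolding off rotate_rotate by (simp add: add.commute)
      then show ?thesis using rot_blocks[of r as] r by simp
    qed
    have z: "Dr p (blocks bs) (rotate (Suc t) (blocks (rotate r as))) = 0" if "t < as ! r" for t
      by (rule Dr_rot_zero) (use assms r that in auto)
    show "(\<Sum>t<Suc (as ! r). Dr p (blocks bs) (rotate ((\<Sum>i<r. Suc (as ! i)) + t) ?u)) = Dr p (blocks bs) (blocks (rotate r as))"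
      unfolding rr using z by (simp add: sum.lessThan_Suc_shift del: sum.lessThan_Suc)
  qed
  also have "\<dots> = (\<Sum>r<?k. \<Prod>j<?k. (1 - p) * Bn p (bs ! j) (as ! ((r + j) mod ?k)))"
  proof (rule sum.cong[OF refl])
    fix r assume r: "r \<in> {..<?k}"
    show "Dr p (blocks bs) (blocks (rotate r as)) = (\<Prod>j<?k. (1 - p) * Bn p (bs ! j) (as ! ((r + j) mod ?k)))"
      using Dr_blocks[of bs "rotate r as" p] assms by (simp add: nth_rotate)
  qed
  finally show ?thesis using del_prob_Dr[OF ne] by simp
qed



definition lst :: "nat \<Rightarrow> (nat \<Rightarrow> nat) \<Rightarrow> nat list" where
  "lst k E = concat (map (\<lambda>i. replicate (E i) i) [0..<k])"

lemma prod_list_lst: "prod_list (map g (lst k E)) = (\<Prod>i<k. g i ^ E i)"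
  by (induction k) (auto simp: lst_def prod_list_replicate)

lemma length_lst: "length (lst k E) = (\<Sum>i<k. E i)"
  by (induction k) (auto simp: lst_def)

lemma cyc_stat_lst: assumes "length v = k"
  shows "real (cyc_stat v (lst k E)) = (\<Sum>r<k. \<Prod>i<k. real (v ! ((i + r) mod k)) ^ E i)"
  unfolding cyc_stat_def prod_list_lst assms by simp

lemma expand:
  assumes f: "\<forall>i<k. \<forall>m\<le>X. f i m = (\<Sum>j\<le>X. c i j * real m ^ j)" and v: "length v = k" "\<forall>i<k. v ! i \<le> X"
  shows "(\<Sum>r<k. \<Prod>i<k. f i (v ! ((i + r) mod k)))
       = (\<Sum>E\<in>PiE {..<k} (\<lambda>_. {..X}). (\<Prod>i<k. c i (E i)) * real (cyc_stat v (lst k E)))"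
proof -
  have "(\<Sum>r<k. \<Prod>i<k. f i (v ! ((i + r) mod k)))
      = (\<Sum>r<k. \<Prod>i<k. \<Sum>j\<le>X. c i j * real (v ! ((i + r) mod k)) ^ j)"
  proof (intro sum.cong prod.cong refl)
    fix r i assume i: "i \<in> {..<k}"
    then have "(i + r) mod k < k" by simp
    then show "f i (v ! ((i + r) mod k)) = (\<Sum>j\<le>X. c i j * real (v ! ((i + r) mod k)) ^ j)"
      using f v i by auto
  qed
  also have "\<dots> = (\<Sum>r<k. \<Sum>E\<in>PiE {..<k} (\<lambda>_. {..X}). \<Prod>i<k. c i (E i) * real (v ! ((i + r) mod k)) ^ E i)"
    by (intro sum.cong refl prod_sum_PiE) auto
  also have "\<dots> = (\<Sum>E\<in>PiE {..<k} (\<lambda>_. {..X}). \<Sum>r<k. \<Prod>i<k. c i (E i) * real (v ! ((i + r) mod k)) ^ E i)"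
    by (rule sum.swap)
  also have "\<dots> = (\<Sum>E\<in>PiE {..<k} (\<lambda>_. {..X}). (\<Prod>i<k. c i (E i)) * real (cyc_stat v (lst k E)))"
    by (intro sum.cong refl) (simp add: cyc_stat_lst[OF v(1)] prod.distrib sum_distrib_left)
  finally show ?thesis .
qed

lemma prod_bound:
  fixes c :: "nat \<Rightarrow> nat \<Rightarrow> real"
  assumes "\<forall>i<k. \<forall>j. \<bar>c i j\<bar> \<le> K * e ^ j" "0 \<le> e" "0 \<le> K"
  shows "\<bar>\<Prod>i<k. c i (E i)\<bar> \<le> K ^ k * e ^ (\<Sum>i<k. E i)"
proof -
  have "\<bar>\<Prod>i<k. c i (E i)\<bar> = (\<Prod>i<k. \<bar>c i (E i)\<bar>)" by (simp add: abs_prod)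
  also have "\<dots> \<le> (\<Prod>i<k. K * e ^ E i)" using assms by (intro prod_mono) auto
  also have "\<dots> = K ^ k * e ^ (\<Sum>i<k. E i)" by (simp add: prod.distrib power_sum)
  finally show ?thesis .
qed

lemma diff_bound:
  fixes c :: "nat \<Rightarrow> nat \<Rightarrow> real" and A B :: "(nat \<Rightarrow> nat) \<Rightarrow> real"
  assumes c: "\<forall>i<k. \<forall>j. \<bar>c i j\<bar> \<le> K * e ^ j" and e: "0 \<le> e" "e \<le> 1" and K: "0 \<le> K"
    and AB: "\<forall>E\<in>Es. (\<Sum>i<k. E i) \<le> q \<longrightarrow> A E = B E" and fin: "finite Es"
  shows "\<bar>(\<Sum>E\<in>Es. (\<Prod>i<k. c i (E i)) * A E) - (\<Sum>E\<in>Es. (\<Prod>i<k. c i (E i)) * B E)\<bar>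
         \<le> K ^ k * e ^ (q + 1) * (\<Sum>E\<in>Es. \<bar>A E - B E\<bar>)"
proof -
  have "\<bar>(\<Sum>E\<in>Es. (\<Prod>i<k. c i (E i)) * A E) - (\<Sum>E\<in>Es. (\<Prod>i<k. c i (E i)) * B E)\<bar>
      = \<bar>\<Sum>E\<in>Es. (\<Prod>i<k. c i (E i)) * (A E - B E)\<bar>"
    by (simp only: sum_subtractf[symmetric] right_diff_distrib)
  also have "\<dots> \<le> (\<Sum>E\<in>Es. \<bar>(\<Prod>i<k. c i (E i)) * (A E - B E)\<bar>)" by (rule sum_abs)
  also have "\<dots> \<le> (\<Sum>E\<in>Es. K ^ k * e ^ (q + 1) * \<bar>A E - B E\<bar>)"
  proof (rule sum_mono)
    fix E assume E: "E \<in> Es"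
    show "\<bar>(\<Prod>i<k. c i (E i)) * (A E - B E)\<bar> \<le> K ^ k * e ^ (q + 1) * \<bar>A E - B E\<bar>"
    proof (cases "(\<Sum>i<k. E i) \<le> q")
      case True then show ?thesis using AB E K e by simp
    next
      case False
      have "\<bar>\<Prod>i<k. c i (E i)\<bar> \<le> K ^ k * e ^ (\<Sum>i<k. E i)" by (rule prod_bound[OF c e(1) K])
      also have "\<dots> \<le> K ^ k * e ^ (q + 1)" using False e K by (intro mult_left_mono power_decreasing) auto
      finally show ?thesis by (simp add: abs_mult mult_right_mono)
    qed
  qed
  also have "\<dots> = K ^ k * e ^ (q + 1) * (\<Sum>E\<in>Es. \<bar>A E - B E\<bar>)" by (simp add: sum_distrib_left)
  finally show ?thesis .
qed

lemma reidx: fixes k :: nat and F :: "nat \<Rightarrow> nat \<Rightarrow> real" assumes "k > 0"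
  shows "(\<Sum>r<k. \<Prod>j<k. F j ((r + j) mod k)) = (\<Sum>r<k. \<Prod>i<k. F ((i + r) mod k) i)"
proof -
  have "(\<Prod>j<k. F j ((r + j) mod k)) = (\<Prod>i<k. F ((i + (k - r)) mod k) i)" if r: "r < k" for r
  proof (rule prod.reindex_bij_witness[of _ "\<lambda>i. (i + (k - r)) mod k" "\<lambda>j. (r + j) mod k"])
    fix j assume j: "j \<in> {..<k}"
    have "((r + j) mod k + (k - r)) mod k = (r + j + (k - r)) mod k" by (simp add: mod_add_left_eq)
    also have "r + j + (k - r) = j + k" using r by simp
    finally show jj: "((r + j) mod k + (k - r)) mod k = j" using j by simp
    show "F (((r + j) mod k + (k - r)) mod k) ((r + j) mod k) = F j ((r + j) mod k)" using jj by simp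
    show "(r + j) mod k \<in> {..<k}" using assms by simp
  next
    fix i assume i: "i \<in> {..<k}"
    have "(r + (i + (k - r)) mod k) mod k = (r + (i + (k - r))) mod k" by (simp add: mod_add_right_eq)
    also have "r + (i + (k - r)) = i + k" using r by simp
    finally show "(r + (i + (k - r)) mod k) mod k = i" using i by simp
    show "(i + (k - r)) mod k \<in> {..<k}" using assms by simp
  qed
  then have "(\<Sum>r<k. \<Prod>j<k. F j ((r + j) mod k)) = (\<Sum>r<k. \<Prod>i<k. F ((i + (k - r)) mod k) i)" by simp
  also have "\<dots> = (\<Sum>r<k. \<Prod>i<k. F ((i + r) mod k) i)"
  proof (rule sum.reindex_bij_witness[of _ "\<lambda>s. (k - s) mod k" "\<lambda>s. (k - s) mod k"])
    fix s assume s: "s \<in> {..<k}"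
    show "(k - (k - s) mod k) mod k = s" using s by (cases "s = 0") (auto simp: mod_if)
    show "(k - s) mod k \<in> {..<k}" using assms by simp
    show "(\<Prod>i<k. F ((i + (k - s) mod k) mod k) i) = (\<Prod>i<k. F ((i + (k - s)) mod k) i)"
      by (simp add: mod_add_right_eq)
  next
    fix s assume s: "s \<in> {..<k}"
    show "(k - (k - s) mod k) mod k = s" using s by (cases "s = 0") (auto simp: mod_if)
    show "(k - s) mod k \<in> {..<k}" using assms by simp
  qed
  finally show ?thesis .
qed



lemma T_small: assumes "length v = k" "length w = k" "(\<Sum>i<k. E i) = 0"
  shows "cyc_stat v (lst k E) = cyc_stat w (lst k E)"
proof -
  have "lst k E = []" using assms(3) length_lst[of k E] by simp
  then show ?thesis using assms by (simp add: cyc_stat_def)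
qed

theorem lemma5p3:
  fixes k z :: nat and p C :: real and x y :: "nat list"
  assumes "k > 0" and "0 < p" and "p < 1" and "z \<ge> 1"
    and "length x = k" and "length y = k"
    and "mset x = mset y"
    and "\<forall>is. 1 \<le> length is \<and> length is \<le> z \<longrightarrow> cyc_stat x is = cyc_stat y is"
    and "C > 0"
  shows "\<exists>N c0. \<forall>(n::nat) (c::real) (as::nat list).
           n \<ge> N \<and> c \<ge> c0 \<and> length as = k \<and>
           (\<forall>j<k. \<bar>real (as ! j) - real n * (1 - p)\<bar> \<le> C * sqrt (real n * ln (real n)))
           \<longrightarrow> del_prob p (blocks (map (\<lambda>xi. n + xi) x)) (blocks as)
                 / del_prob p (blocks (map (\<lambda>yi. n + yi) y)) (blocks as)
               \<in> {1 - (c * ln (real n) / real n) powr ((real z + 1) / 2) ..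
                  1 + (c * ln (real n) / real n) powr ((real z + 1) / 2)}"
proof -
  have p: "0 < p" "p < 1" and C: "C > 0" and k: "k > 0" using assms by auto
  define X where "X = sum_list x + sum_list y"
  have xX: "\<forall>i<k. x ! i \<le> X" using assms(5) elem_le_sum_list[of _ x] unfolding X_def by fastforce
  have yX: "\<forall>i<k. y ! i \<le> X" using assms(6) elem_le_sum_list[of _ y] unfolding X_def by fastforce
  obtain K where K: "K \<ge> 0" "\<And>n a e. hyp p C n a e \<Longrightarrow> (\<exists>c. (\<forall>m\<le>X. RR p n a m = (\<Sum>j\<le>X. c j * real m ^ j))
            \<and> (\<forall>j. \<bar>c j\<bar> \<le> K * e ^ j) \<and> c 0 = 1)"
    using RR_poly[OF p C, of X] by blast
  define Es where "Es = PiE {..<k} (\<lambda>_. {..X})"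
  have finEs: "finite Es" unfolding Es_def by (simp add: finite_PiE)
  define z0 where "z0 = replicate k (0::nat)"
  define T where "T v E = real (cyc_stat v (lst k E))" for v E
  define M1 where "M1 = K ^ k * (\<Sum>E\<in>Es. \<bar>T x E - T y E\<bar>)"
  define M2 where "M2 = K ^ k * (\<Sum>E\<in>Es. \<bar>T y E - T z0 E\<bar>)"
  have M1: "M1 \<ge> 0" unfolding M1_def using K by (simp add: sum_nonneg)
  have M2: "M2 \<ge> 0" unfolding M2_def using K by (simp add: sum_nonneg)
  define d0 where "d0 = min 1 (min (p / (2 * C)) (real k / (2 * M2 + 2)))"
  have d0: "d0 > 0" using p C k M2 unfolding d0_def by simp
  have l1: "((\<lambda>n::nat. ln (real n) / real n) \<longlongrightarrow> 0) sequentially"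
    by (rule filterlim_compose[OF ln_x_over_x_tendsto_0 filterlim_real_sequentially])
  have ev1: "eventually (\<lambda>n::nat. ln (real n) / real n < d0 ^ 2) sequentially"
    using order_tendstoD(2)[OF l1, of "d0 ^ 2"] d0 by simp
  have l2: "filterlim (\<lambda>n::nat. ln (real n)) at_top sequentially"
    by (rule filterlim_compose[OF ln_at_top filterlim_real_sequentially])
  have ev2: "eventually (\<lambda>n::nat. 1 \<le> ln (real n)) sequentially"
    using l2 unfolding filterlim_at_top by blast
  obtain N where N: "\<And>n. n \<ge> N \<Longrightarrow> ln (real n) / real n < d0 ^ 2 \<and> 1 \<le> ln (real n)"
    using eventually_conj[OF ev1 ev2] unfolding eventually_sequentially by blast
  define c0 where "c0 = max 1 (2 * M1 / real k)"
  show ?thesis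
  proof (intro exI[of _ N] exI[of _ c0] allI impI)
    fix n :: nat and c :: real and as :: "nat list"
    assume A: "N \<le> n \<and> c0 \<le> c \<and> length as = k \<and>
           (\<forall>j<k. \<bar>real (as ! j) - real n * (1 - p)\<bar> \<le> C * sqrt (real n * ln (real n)))"
    have ln1: "1 \<le> ln (real n)" and lnd: "ln (real n) / real n < d0 ^ 2" using N A by auto
    have n0: "real n > 0" using ln1 by (cases n) auto
    define e where "e = sqrt (ln (real n) / real n)"
    have q0: "ln (real n) / real n > 0" by (rule divide_pos_pos) (use ln1 n0 in linarith)+
    then have e0: "e > 0" unfolding e_def by simp
    have e2: "e ^ 2 = ln (real n) / real n" unfolding e_def using q0 by simp
    have ed: "e < d0" using e2 lnd e0 d0 by (metis power_less_imp_less_base less_imp_le)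
    have e1: "e \<le> 1" using ed unfolding d0_def by simp
    have en: "1 / real n \<le> e ^ 2" unfolding e2 using ln1 n0 by (simp add: divide_right_mono)
    have sq: "sqrt (real n * ln (real n)) = real n * e"
    proof -
      have eq: "real n * ln (real n) = (real n) ^ 2 * (ln (real n) / real n)" using n0 by (simp add: power2_eq_square)
      have "sqrt (real n * ln (real n)) = sqrt ((real n) ^ 2) * sqrt (ln (real n) / real n)"
        unfolding eq by (rule real_sqrt_mult)
      then show ?thesis unfolding e_def by simp
    qed
    have Ce: "C * e \<le> p / 2"
    proof -
      have "e \<le> p / (2 * C)" using ed unfolding d0_def by simp
      then have "C * e \<le> C * (p / (2 * C))" using C by (intro mult_left_mono) auto
      then show ?thesis using C by simp
    qed
    have M2e: "M2 * e \<le> real k / 2"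
    proof -
      have "e \<le> real k / (2 * M2 + 2)" using ed unfolding d0_def by simp
      then have "M2 * e \<le> M2 * (real k / (2 * M2 + 2))" using M2 by (intro mult_left_mono) auto
      also have "\<dots> \<le> real k / 2" using M2 k by (simp add: field_simps)
      finally show ?thesis .
    qed
    have H: "hyp p C n (as ! i) e" if "i < k" for i
      unfolding hyp_def using p C n0 e0 e1 en Ce A that sq by auto
    have "\<forall>i\<in>{..<k}. \<exists>c. (\<forall>m\<le>X. RR p n (as ! i) m = (\<Sum>j\<le>X. c j * real m ^ j))
            \<and> (\<forall>j. \<bar>c j\<bar> \<le> K * e ^ j) \<and> c 0 = 1"
      using K(2)[OF H] by blast
    then obtain cc where cc: "\<forall>i\<in>{..<k}. (\<forall>m\<le>X. RR p n (as ! i) m = (\<Sum>j\<le>X. cc i j * real m ^ j))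
            \<and> (\<forall>j. \<bar>cc i j\<bar> \<le> K * e ^ j) \<and> cc i 0 = 1"
      by (metis bchoice)
    have ccf: "\<forall>i<k. \<forall>m\<le>X. RR p n (as ! i) m = (\<Sum>j\<le>X. cc i j * real m ^ j)" using cc by auto
    have ccb: "\<forall>i<k. \<forall>j. \<bar>cc i j\<bar> \<le> K * e ^ j" using cc by auto
    define S where "S v = (\<Sum>r<k. \<Prod>i<k. RR p n (as ! i) (v ! ((i + r) mod k)))" for v
    have Sexp: "S v = (\<Sum>E\<in>Es. (\<Prod>i<k. cc i (E i)) * T v E)" if "length v = k" "\<forall>i<k. v ! i \<le> X" for v
      unfolding S_def Es_def T_def by (rule expand[OF ccf that])
    have z0X: "\<forall>i<k. z0 ! i \<le> X" unfolding z0_def by simp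
    have lz0: "length z0 = k" unfolding z0_def by simp
    have Sz0: "S z0 = real k"
    proof -
      have "RR p n (as ! i) (z0 ! ((i + r) mod k)) = 1" if "i < k" for i r
        using RR_0[OF H[OF that]] k unfolding z0_def by simp
      then show ?thesis unfolding S_def by simp
    qed
    have bxy: "\<bar>S x - S y\<bar> \<le> M1 * e ^ (z + 1)"
    proof -
      have AB: "\<forall>E\<in>Es. (\<Sum>i<k. E i) \<le> z \<longrightarrow> T x E = T y E"
      proof (intro ballI impI)
        fix E assume "E \<in> Es" and Ez: "(\<Sum>i<k. E i) \<le> z"
        show "T x E = T y E"
        proof (cases "(\<Sum>i<k. E i) = 0")
          case True from T_small[OF assms(5,6) True] show ?thesis unfolding T_def by simp
        next
          case False
          then have "1 \<le> (\<Sum>i<k. E i)" by linarith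
          then have "1 \<le> length (lst k E) \<and> length (lst k E) \<le> z" using Ez by (simp only: length_lst)
          then show ?thesis unfolding T_def using assms(8) by simp
        qed
      qed
      have "\<bar>S x - S y\<bar> \<le> K ^ k * e ^ (z + 1) * (\<Sum>E\<in>Es. \<bar>T x E - T y E\<bar>)"
        unfolding Sexp[OF assms(5) xX] Sexp[OF assms(6) yX]
        by (rule diff_bound[OF ccb less_imp_le[OF e0] e1 K(1) AB finEs])
      then show ?thesis unfolding M1_def by (simp add: mult_ac)
    qed
    have byz: "\<bar>S y - S z0\<bar> \<le> M2 * e"
    proof -
      have AB: "\<forall>E\<in>Es. (\<Sum>i<k. E i) \<le> 0 \<longrightarrow> T y E = T z0 E"
      proof (intro ballI impI)
        fix E assume "E \<in> Es" "(\<Sum>i<k. E i) \<le> 0"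
        then have E0: "(\<Sum>i<k. E i) = 0" by simp
        have "length z0 = k" unfolding z0_def by simp
        from T_small[OF assms(6) this E0] show "T y E = T z0 E" unfolding T_def by simp
      qed
      have "\<bar>S y - S z0\<bar> \<le> K ^ k * e ^ (0 + 1) * (\<Sum>E\<in>Es. \<bar>T y E - T z0 E\<bar>)"
        unfolding Sexp[OF assms(6) yX] Sexp[OF lz0 z0X]
        by (rule diff_bound[OF ccb less_imp_le[OF e0] e1 K(1) AB finEs])
      then show ?thesis unfolding M2_def by (simp add: mult_ac)
    qed
    have Sy: "S y \<ge> real k / 2" using byz Sz0 M2e by linarith
    have Sy0: "S y > 0" using Sy k by linarith
    define Q where "Q = (\<Prod>i<k. (1 - p) * Bn p n (as ! i))"
    have Q: "Q > 0" unfolding Q_def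
    proof (rule prod_pos)
      fix i assume i: "i \<in> {..<k}"
      have "Bn p n (as ! i) > 0" using hyp_basic[OF H[of i]] i by (intro Bn_pos) auto
      then show "(1 - p) * Bn p n (as ! i) > 0" using p by simp
    qed
    define Lb where "Lb = real (length (blocks as))"
    have dform: "del_prob p (blocks (map (\<lambda>xi. n + xi) v)) (blocks as) = Q * S v / Lb" if "length v = k" for v
    proof -
      have "del_prob p (blocks (map (\<lambda>xi. n + xi) v)) (blocks as)
          = (\<Sum>r<k. \<Prod>j<k. (1 - p) * Bn p (n + v ! j) (as ! ((r + j) mod k))) / Lb"
        using del_formula[of "map (\<lambda>xi. n + xi) v" as p] that A k unfolding Lb_def by simp
      also have "(\<Sum>r<k. \<Prod>j<k. (1 - p) * Bn p (n + v ! j) (as ! ((r + j) mod k)))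
          = (\<Sum>r<k. \<Prod>i<k. (1 - p) * Bn p (n + v ! ((i + r) mod k)) (as ! i))"
        by (rule reidx[OF k])
      also have "\<dots> = (\<Sum>r<k. \<Prod>i<k. ((1 - p) * Bn p n (as ! i)) * RR p n (as ! i) (v ! ((i + r) mod k)))"
      proof (intro sum.cong prod.cong refl)
        fix r i assume i: "i \<in> {..<k}"
        have "Bn p n (as ! i) > 0" using hyp_basic[OF H[of i]] i by (intro Bn_pos) auto
        then show "(1 - p) * Bn p (n + v ! ((i + r) mod k)) (as ! i) = ((1 - p) * Bn p n (as ! i)) * RR p n (as ! i) (v ! ((i + r) mod k))"
          unfolding RR_def by simp
      qed
      also have "\<dots> = Q * S v" unfolding Q_def S_def by (simp add: prod.distrib sum_distrib_left)
      finally show ?thesis .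
    qed
    have Lb: "Lb > 0" unfolding Lb_def using A k by (cases as) (auto simp: blocks_Cons)
    have ratio: "del_prob p (blocks (map (\<lambda>xi. n + xi) x)) (blocks as)
                 / del_prob p (blocks (map (\<lambda>yi. n + yi) y)) (blocks as) = S x / S y"
      using dform[OF assms(5)] dform[OF assms(6)] Q Lb Sy0 by simp
    define t where "t = (c * ln (real n) / real n) powr ((real z + 1) / 2)"
    have c1: "c \<ge> 1" and cM: "c \<ge> 2 * M1 / real k" using A unfolding c0_def by auto
    have tb: "t \<ge> c * e ^ (z + 1)"
    proof -
      have "c * ln (real n) / real n = c * e ^ 2" using e2 by simp
      then have "t = c powr ((real z + 1) / 2) * (e ^ 2) powr ((real z + 1) / 2)"
        unfolding t_def by (simp add: powr_mult)
      also have "(e ^ 2) powr ((real z + 1) / 2) = e ^ (z + 1)"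
      proof -
        have "(e ^ 2) powr ((real z + 1) / 2) = (e powr 2) powr ((real z + 1) / 2)"
        proof -
          have "e powr 2 = e ^ 2" using powr_realpow[OF e0, of 2] by simp
          then show ?thesis by (simp only:)
        qed
        also have "\<dots> = e powr (real (z + 1))"
        proof -
          have "2 * ((real z + 1) / 2) = real (z + 1)" by simp
          then show ?thesis by (simp only: powr_powr)
        qed
        also have "\<dots> = e ^ (z + 1)" using e0 by (rule powr_realpow)
        finally show ?thesis .
      qed
      finally have teq: "t = c powr ((real z + 1) / 2) * e ^ (z + 1)" .
      have "c powr 1 \<le> c powr ((real z + 1) / 2)"
        using c1 assms(4) by (intro powr_mono) auto
      then have "c \<le> c powr ((real z + 1) / 2)" using c1 by simp
      then have "c * e ^ (z + 1) \<le> c powr ((real z + 1) / 2) * e ^ (z + 1)"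
        using e0 by (intro mult_right_mono) auto
      then show ?thesis using teq by simp
    qed
    have "\<bar>S x / S y - 1\<bar> = \<bar>S x - S y\<bar> / S y" using Sy0 by (simp add: field_simps)
    also have "\<dots> \<le> (M1 * e ^ (z + 1)) / (real k / 2)"
      using bxy Sy k M1 e0 by (intro frac_le) auto
    also have "\<dots> = (2 * M1 / real k) * e ^ (z + 1)" by (simp add: field_simps)
    also have "\<dots> \<le> c * e ^ (z + 1)" using cM e0 by (intro mult_right_mono) auto
    also have "\<dots> \<le> t" by (rule tb)
    finally have "\<bar>S x / S y - 1\<bar> \<le> t" .
    then show "del_prob p (blocks (map (\<lambda>xi. n + xi) x)) (blocks as)
                 / del_prob p (blocks (map (\<lambda>yi. n + yi) y)) (blocks as)
               \<in> {1 - (c * ln (real n) / real n) powr ((real z + 1) / 2) ..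
                  1 + (c * ln (real n) / real n) powr ((real z + 1) / 2)}"
      unfolding ratio t_def by (simp add: abs_le_iff)
  qed
qed


end
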